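(* Let $\pi\colon E\to B$ and $\pi'\colon E'\to B'$ be Hurewicz fibrations with path-connected bases $B$ and $B'$. Let $f,g\colon E\to E'$ and $\bar f,\bar g\colon B\to B'$ be continuous maps with $\pi'\circ f=\bar f\circ\pi$ and $\pi'\circ g=\bar g\circ\pi$. Let $b_0\in B$ satisfy $\bar f(b_0)=b_0'=\bar g(b_0)$, let $F_0=\pi^{-1}(b_0)$, $F_0'=\pi'^{-1}(b_0')$, and let $f_0,g_0\colon F_0\to F_0'$ be the maps induced by $f$ and $g$. Then $$\mathrm{D}(f,g)+1\leq \big(\mathrm{D}(f_0,g_0)+1\big)\big(\mathrm{cat}(B)+1\big).$$
   Context: For continuous maps $f,g\colon X\to Y$, the homotopic distance $\mathrm{D}(f,g)$ is the least integer $n\geq 0$ such that there is an open cover $\{U_0,\dots,U_n\}$ of $X$ with $f|_{U_j}\simeq g|_{U_j}$ for all $j$ ($\infty$ if none exists). For a path-connected space $B$, $\mathrm{cat}(B)$ is the least integer $n\geq 0$ such that $B$ can be covered by $n+1$ open sets whose inclusions into $B$ are null-homotopic. *)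

theory Defs
  imports "HOL-Analysis.Analysis" "HOL-Library.Extended_Nat"
begin

text \<open>Homotopy lifting property of p : E \<rightarrow> B with respect to all test spaces
  whose points have type 'x (the test type is selected by the itself argument).\<close>
definition hlp_wrt :: "'x itself \<Rightarrow> 'e topology \<Rightarrow> 'b topology \<Rightarrow> ('e \<Rightarrow> 'b) \<Rightarrow> bool" where
  "hlp_wrt T E B p \<longleftrightarrow>
     (\<forall>(X::'x topology) h H.
        continuous_map X E h \<and>
        continuous_map (prod_topology X (top_of_set {0..1::real})) B H \<and>
        (\<forall>x\<in>topspace X. H (x, 0) = p (h x))
        \<longrightarrow> (\<exists>K. continuous_map (prod_topology X (top_of_set {0..1::real})) E K \<and>
                 (\<forall>x\<in>topspace X. K (x, 0) = h x) \<and>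
                 (\<forall>z\<in>topspace (prod_topology X (top_of_set {0..1::real})). p (K z) = H z)))"

definition hurewicz_fibration :: "'x itself \<Rightarrow> 'e topology \<Rightarrow> 'b topology \<Rightarrow> ('e \<Rightarrow> 'b) \<Rightarrow> bool" where
  "hurewicz_fibration T E B p \<longleftrightarrow> continuous_map E B p \<and> hlp_wrt T E B p"

text \<open>Homotopic distance D(f,g), with value \<infinity> if no finite open cover exists.\<close>
definition homotopic_distance :: "'a topology \<Rightarrow> 'b topology \<Rightarrow> ('a \<Rightarrow> 'b) \<Rightarrow> ('a \<Rightarrow> 'b) \<Rightarrow> enat" where
  "homotopic_distance X Y f g =
     (INF n \<in> {n::nat. \<exists>U::nat \<Rightarrow> 'a set.
         (\<forall>j\<le>n. openin X (U j)) \<and> (\<Union>j\<le>n. U j) = topspace X \<and>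
         (\<forall>j\<le>n. homotopic_with (\<lambda>_. True) (subtopology X (U j)) Y f g)}. enat n)"

text \<open>Lusternik--Schnirelmann category (normalized), \<infinity> if no finite cover exists.\<close>
definition ls_cat :: "'a topology \<Rightarrow> enat" where
  "ls_cat B =
     (INF n \<in> {n::nat. \<exists>U::nat \<Rightarrow> 'a set.
         (\<forall>j\<le>n. openin B (U j)) \<and> (\<Union>j\<le>n. U j) = topspace B \<and>
         (\<forall>j\<le>n. \<exists>c\<in>topspace B. homotopic_with (\<lambda>_. True) (subtopology B (U j)) B id (\<lambda>_. c))}. enat n)"

end

theory Submission
  imports Defs
begin


lemma enat_inf_aux: "(x::enat) = \<infinity> \<or> y = \<infinity> \<Longrightarrow> (x + 1) * (y + 1) = \<infinity>"
proof -
  have "x + 1 \<noteq> 0" "y + 1 \<noteq> 0" by (simp_all add: eSuc_plus_1[symmetric])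
  moreover assume "x = \<infinity> \<or> y = \<infinity>"
  ultimately show ?thesis by (auto simp: imult_is_infinity)
qed

lemma km_aux: "(j::nat) \<le> m \<Longrightarrow> (i*(m+1)+j) mod (m+1) = j \<and> (i*(m+1)+j) div (m+1) = i"
proof -
  assume "j \<le> m"
  then have l: "j < m+1" by simp
  have nz: "m+1 \<noteq> (0::nat)" by simp
  show ?thesis using l by (simp only: mod_mult_self3 div_mult_self3[OF nz] mod_less div_less) simp
qed

lemma hlp_transfer:
  fixes X :: "'e topology" and E :: "'e topology" and B :: "'b topology"
  assumes hlp: "hlp_wrt TYPE('e \<times> real) E B p"
    and h: "continuous_map X E h"
    and H: "continuous_map (prod_topology X (top_of_set {0..1::real})) B H"
    and H0: "\<forall>x\<in>topspace X. H (x, 0) = p (h x)"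
  shows "\<exists>K. continuous_map (prod_topology X (top_of_set {0..1::real})) E K \<and>
                 (\<forall>x\<in>topspace X. K (x, 0) = h x) \<and>
                 (\<forall>z\<in>topspace (prod_topology X (top_of_set {0..1::real})). p (K z) = H z)"
proof -
  define X' :: "('e \<times> real) topology" where "X' = prod_topology X (top_of_set {0::real})"
  define h' :: "'e \<times> real \<Rightarrow> 'e" where "h' = h \<circ> fst"
  define H' where "H' = (\<lambda>z::('e\<times>real)\<times>real. H (fst (fst z), snd z))"
  have tX': "topspace X' = topspace X \<times> {0}" by (simp add: X'_def)
  have c1: "continuous_map X' E h'" unfolding h'_def X'_def
    using h continuous_map_fst continuous_map_compose by blast
  have c2: "continuous_map (prod_topology X' (top_of_set {0..1::real})) B H'"
  proof -
    have "continuous_map (prod_topology X' (top_of_set {0..1::real})) (prod_topology X (top_of_set {0..1::real}))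
           (\<lambda>z. (fst (fst z), snd z))"
      unfolding X'_def
      by (intro continuous_map_pairedI continuous_map_fst continuous_map_snd
          continuous_map_compose[OF continuous_map_fst continuous_map_fst, unfolded o_def])
    then show ?thesis unfolding H'_def using H continuous_map_compose[of _ _ _ _ H] by (auto simp: o_def)
  qed
  have c3: "\<forall>x\<in>topspace X'. H' (x, 0) = p (h' x)" using H0 by (auto simp: tX' H'_def h'_def)
  obtain K' where K1: "continuous_map (prod_topology X' (top_of_set {0..1::real})) E K'"
     and K2: "\<forall>x\<in>topspace X'. K' (x, 0) = h' x"
     and K3: "\<forall>z\<in>topspace (prod_topology X' (top_of_set {0..1::real})). p (K' z) = H' z"
    using hlp[unfolded hlp_wrt_def, rule_format, of X' h' H'] c1 c2 c3 by blast
  define K where "K = (\<lambda>z. K' ((fst z, 0::real), snd z))"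
  have "continuous_map (prod_topology X (top_of_set {0..1::real})) (prod_topology X' (top_of_set {0..1::real}))
           (\<lambda>z. ((fst z, 0::real), snd z))"
    unfolding X'_def
    by (intro continuous_map_pairedI continuous_map_fst continuous_map_snd continuous_map_const[THEN iffD2]) auto
  then have "continuous_map (prod_topology X (top_of_set {0..1::real})) E K"
    unfolding K_def using K1 continuous_map_compose[of _ _ _ _ K'] by (auto simp: o_def)
  moreover have "\<forall>x\<in>topspace X. K (x, 0) = h x" using K2 by (auto simp: K_def tX' h'_def)
  moreover have "\<forall>z\<in>topspace (prod_topology X (top_of_set {0..1::real})). p (K z) = H z"
    using K3 by (auto simp: K_def tX' H'_def)
  ultimately show ?thesis by blast
qed

lemma deform:
  fixes E :: "'e topology" and B :: "'b topology"
  assumes hlp: "hlp_wrt TYPE('e \<times> real) E B p" and cp: "continuous_map E B p"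
    and U: "openin B U"
    and hU: "homotopic_with (\<lambda>_. True) (subtopology B U) B id (\<lambda>_. b0)"
  shows "\<exists>\<phi>. continuous_map (subtopology E {x \<in> topspace E. p x \<in> U})
                 (subtopology E {x \<in> topspace E. p x = b0}) \<phi> \<and>
             homotopic_with (\<lambda>_. True) (subtopology E {x \<in> topspace E. p x \<in> U}) E id \<phi>"
proof -
  let ?W = "{x \<in> topspace E. p x \<in> U}"
  let ?I = "top_of_set {0..1::real}"
  obtain G where G1: "continuous_map (prod_topology ?I (subtopology B U)) B G"
    and G0: "\<And>x. G (0, x) = x" and G1': "\<And>x. G (1, x) = b0"
    using hU unfolding homotopic_with_def by auto
  have cpW: "continuous_map (subtopology E ?W) (subtopology B U) p"
    by (auto simp: continuous_map_in_subtopology intro!: continuous_map_from_subtopology cp)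
  have "continuous_map (prod_topology (subtopology E ?W) ?I) (prod_topology ?I (subtopology B U))
           (\<lambda>z. (snd z, p (fst z)))"
    by (intro continuous_map_pairedI continuous_map_snd
          continuous_map_compose[OF continuous_map_fst cpW, unfolded o_def])
  then have cH: "continuous_map (prod_topology (subtopology E ?W) ?I) B (\<lambda>z. G (snd z, p (fst z)))"
    using G1 continuous_map_compose[of _ _ _ _ G] by (auto simp: o_def)
  obtain K where K1: "continuous_map (prod_topology (subtopology E ?W) ?I) E K"
    and K0: "\<forall>x\<in>topspace (subtopology E ?W). K (x, 0) = x"
    and K2: "\<forall>z\<in>topspace (prod_topology (subtopology E ?W) ?I). p (K z) = G (snd z, p (fst z))"
    using hlp_transfer[OF hlp, of "subtopology E ?W" id "\<lambda>z. G (snd z, p (fst z))"] cH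
      G0 by auto
  define \<phi> where "\<phi> = (\<lambda>x. K (x, 1))"
  have "continuous_map (subtopology E ?W) (prod_topology (subtopology E ?W) ?I) (\<lambda>x. (x, 1))"
    by (intro continuous_map_pairedI continuous_map_id[unfolded id_def] continuous_map_const[THEN iffD2]) auto
  then have c\<phi>: "continuous_map (subtopology E ?W) E \<phi>"
    unfolding \<phi>_def using K1 continuous_map_compose[of _ _ _ _ K] by (auto simp: o_def)
  have "\<phi> x \<in> {x \<in> topspace E. p x = b0}" if "x \<in> topspace (subtopology E ?W)" for x
    using K2 that c\<phi> G1' by (auto simp: \<phi>_def continuous_map_def)
  then have 1: "continuous_map (subtopology E ?W) (subtopology E {x \<in> topspace E. p x = b0}) \<phi>"
    using c\<phi> by (auto simp: continuous_map_in_subtopology)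
  define k where "k = (\<lambda>(t::real, x). if t = 0 then x else K (x, t))"
  have "continuous_map (prod_topology ?I (subtopology E ?W)) (prod_topology (subtopology E ?W) ?I) (\<lambda>z. (snd z, fst z))"
    by (intro continuous_map_pairedI continuous_map_snd continuous_map_fst)
  then have "continuous_map (prod_topology ?I (subtopology E ?W)) E (\<lambda>z. K (snd z, fst z))"
    using K1 continuous_map_compose[of _ _ _ _ K] by (auto simp: o_def)
  then have "continuous_map (prod_topology ?I (subtopology E ?W)) E k"
    by (rule continuous_map_eq) (use K0 in \<open>auto simp: k_def\<close>)
  then have 2: "homotopic_with (\<lambda>_. True) (subtopology E ?W) E id \<phi>"
    unfolding homotopic_with_def by (intro exI[of _ k]) (auto simp: k_def \<phi>_def)
  show ?thesis using 1 2 by blast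
qed

lemma piece:
  fixes E :: "'e topology" and E' :: "'f topology"
  assumes cf: "continuous_map E E' f" and cg: "continuous_map E E' g"
    and c\<phi>: "continuous_map (subtopology E W) (subtopology E F) \<phi>"
    and h\<phi>: "homotopic_with (\<lambda>_. True) (subtopology E W) E id \<phi>"
    and hV: "homotopic_with (\<lambda>_. True) (subtopology (subtopology E F) V) (subtopology E' F') f g"
  shows "homotopic_with (\<lambda>_. True) (subtopology E {x \<in> W. \<phi> x \<in> V}) E' f g"
proof -
  let ?W = "{x \<in> W. \<phi> x \<in> V}"
  have ci: "continuous_map (subtopology E ?W) (subtopology E W) id"
    by (simp add: continuous_map_in_subtopology continuous_map_from_subtopology_mono[of E W])
  have a: "homotopic_with (\<lambda>_. True) (subtopology E ?W) E id \<phi>"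
    using homotopic_with_compose_continuous_map_right[OF h\<phi> ci] by (simp add: o_def id_def)
  have b1: "homotopic_with (\<lambda>_. True) (subtopology E ?W) E' f (f \<circ> \<phi>)"
    using homotopic_with_compose_continuous_map_left[OF a cf] by simp
  have b2: "homotopic_with (\<lambda>_. True) (subtopology E ?W) E' g (g \<circ> \<phi>)"
    using homotopic_with_compose_continuous_map_left[OF a cg] by simp
  have c\<phi>': "continuous_map (subtopology E ?W) (subtopology (subtopology E F) V) \<phi>"
  proof -
    have "continuous_map (subtopology E ?W) (subtopology E F) \<phi>"
      using continuous_map_from_subtopology_mono[OF c\<phi>] by auto
    then show ?thesis by (auto simp: continuous_map_in_subtopology)
  qed
  have "homotopic_with (\<lambda>_. True) (subtopology E ?W) (subtopology E' F') (f \<circ> \<phi>) (g \<circ> \<phi>)"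
    using homotopic_with_compose_continuous_map_right[OF hV c\<phi>'] by simp
  from homotopic_with_compose_continuous_map_left[OF this continuous_map_id_subt, of "\<lambda>_. True"]
  have c: "homotopic_with (\<lambda>_. True) (subtopology E ?W) E' (f \<circ> \<phi>) (g \<circ> \<phi>)"
    by simp
  show ?thesis
    using homotopic_with_trans[OF b1 homotopic_with_trans[OF c b2[THEN homotopic_with_symD]]] .
qed

lemma INF_enat_mem:
  assumes "(INF n\<in>S. enat n) = enat k" shows "k \<in> S"
proof -
  have ne: "S \<noteq> {}" using assms by (auto simp: top_enat_def)
  have "(INF n\<in>S. enat n) = enat (LEAST n. n \<in> S)"
  proof (rule antisym)
    show "(INF n\<in>S. enat n) \<le> enat (LEAST n. n \<in> S)"
      using ne by (intro INF_lower) (auto intro: LeastI)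
    show "enat (LEAST n. n \<in> S) \<le> (INF n\<in>S. enat n)"
      by (intro INF_greatest) (auto intro: Least_le)
  qed
  then show ?thesis using assms ne by (auto intro: LeastI)
qed



theorem theorem6p1:
  fixes E :: "'e topology" and B :: "'b topology" and E' :: "'f topology" and B' :: "'c topology"
    and p :: "'e \<Rightarrow> 'b" and p' :: "'f \<Rightarrow> 'c"
    and f g :: "'e \<Rightarrow> 'f" and fb gb :: "'b \<Rightarrow> 'c" and b0 :: 'b and b0' :: 'c
  assumes "hurewicz_fibration TYPE('e \<times> real) E B p"
    and "hurewicz_fibration TYPE('e \<times> real) E' B' p'"
    and "path_connected_space B" and "path_connected_space B'"
    and "continuous_map E E' f" and "continuous_map E E' g"
    and "continuous_map B B' fb" and "continuous_map B B' gb"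
    and "\<forall>x\<in>topspace E. p' (f x) = fb (p x)"
    and "\<forall>x\<in>topspace E. p' (g x) = gb (p x)"
    and "b0 \<in> topspace B" and "fb b0 = b0'" and "gb b0 = b0'"
  shows "homotopic_distance E E' f g + 1 \<le>
           (homotopic_distance (subtopology E {x \<in> topspace E. p x = b0})
                               (subtopology E' {y \<in> topspace E'. p' y = b0'}) f g + 1)
           * (ls_cat B + 1)"
  proof -
  let ?F0 = "{x \<in> topspace E. p x = b0}"
  let ?F0' = "{y \<in> topspace E'. p' y = b0'}"
  let ?D0 = "homotopic_distance (subtopology E ?F0) (subtopology E' ?F0') f g"
  note hf = assms(1)[unfolded hurewicz_fibration_def]
  show ?thesis
  proof (cases "?D0 = \<infinity> \<or> ls_cat B = \<infinity>")
    case True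
    have "(?D0 + 1) * (ls_cat B + 1) = \<infinity>" by (rule enat_inf_aux[OF True])
    then show ?thesis by simp
  next
    case False
    then obtain n m where n: "?D0 = enat n" and m: "ls_cat B = enat m" by auto
    from INF_enat_mem[OF n[unfolded homotopic_distance_def]] obtain V :: "nat \<Rightarrow> 'e set" where
      V1: "\<forall>j\<le>n. openin (subtopology E ?F0) (V j)"
      and V2: "(\<Union>j\<le>n. V j) = topspace (subtopology E ?F0)"
      and V3: "\<forall>j\<le>n. homotopic_with (\<lambda>_. True) (subtopology (subtopology E ?F0) (V j)) (subtopology E' ?F0') f g"
      by blast
    from INF_enat_mem[OF m[unfolded ls_cat_def]] obtain U :: "nat \<Rightarrow> 'b set" where
      U1: "\<forall>j\<le>m. openin B (U j)"
      and U2: "(\<Union>j\<le>m. U j) = topspace B"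
      and U3: "\<forall>j\<le>m. \<exists>c\<in>topspace B. homotopic_with (\<lambda>_. True) (subtopology B (U j)) B id (\<lambda>_. c)"
      by blast
    have "\<forall>j. \<exists>\<phi>. j \<le> m \<longrightarrow> continuous_map (subtopology E {x \<in> topspace E. p x \<in> U j})
                 (subtopology E ?F0) \<phi> \<and>
             homotopic_with (\<lambda>_. True) (subtopology E {x \<in> topspace E. p x \<in> U j}) E id \<phi>"
    proof
      fix j
      show "\<exists>\<phi>. j \<le> m \<longrightarrow> continuous_map (subtopology E {x \<in> topspace E. p x \<in> U j})
                 (subtopology E ?F0) \<phi> \<and>
             homotopic_with (\<lambda>_. True) (subtopology E {x \<in> topspace E. p x \<in> U j}) E id \<phi>"
      proof (cases "j \<le> m")
        case True
        then obtain c where c: "c \<in> topspace B"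
          and hc: "homotopic_with (\<lambda>_. True) (subtopology B (U j)) B id (\<lambda>_. c)" using U3 by blast
        have "path_component_of B c b0"
          by (rule path_connected_space_iff_path_component[THEN iffD1, OF assms(3), rule_format, OF c assms(11)])
        then have "homotopic_with (\<lambda>_. True) (subtopology B (U j)) B (\<lambda>_. c) (\<lambda>_. b0)"
          by (intro homotopic_constant_maps[THEN iffD2] disjI2)
        then have "homotopic_with (\<lambda>_. True) (subtopology B (U j)) B id (\<lambda>_. b0)"
          by (rule homotopic_with_trans[OF hc])
        from deform[OF hf[THEN conjunct2] hf[THEN conjunct1] U1[rule_format, OF True] this]
        show ?thesis by blast
      qed auto
    qed
    from choice[OF this] obtain \<Phi> where \<Phi>0: "\<forall>j. j \<le> m \<longrightarrow> continuous_map (subtopology E {x \<in> topspace E. p x \<in> U j})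
                 (subtopology E ?F0) (\<Phi> j) \<and>
             homotopic_with (\<lambda>_. True) (subtopology E {x \<in> topspace E. p x \<in> U j}) E id (\<Phi> j)" ..
    have \<Phi>: "\<And>j. j \<le> m \<Longrightarrow> continuous_map (subtopology E {x \<in> topspace E. p x \<in> U j})
                 (subtopology E ?F0) (\<Phi> j) \<and>
             homotopic_with (\<lambda>_. True) (subtopology E {x \<in> topspace E. p x \<in> U j}) E id (\<Phi> j)"
      using \<Phi>0 by blast
    define W where "W = (\<lambda>k. {x \<in> {x \<in> topspace E. p x \<in> U (k mod (m+1))}. \<Phi> (k mod (m+1)) x \<in> V (k div (m+1))})"
    define N where "N = (n+1)*(m+1) - 1"
    have kb: "k div (m+1) \<le> n" "k mod (m+1) \<le> m" if "k \<le> N" for k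
    proof -
      have "k < (n+1)*(m+1)" using that by (simp add: N_def)
      then show "k div (m+1) \<le> n"
        using less_mult_imp_div_less[of k "n+1" "m+1"] by simp
      show "k mod (m+1) \<le> m" by simp
    qed
    have Wopen: "openin E (W k)" if "k \<le> N" for k
    proof -
      let ?j = "k mod (m+1)" and ?i = "k div (m+1)"
      have o1: "openin E {x \<in> topspace E. p x \<in> U ?j}"
        using openin_continuous_map_preimage[OF hf[THEN conjunct1]] U1 kb[OF that] by blast
      have "openin (subtopology E {x \<in> topspace E. p x \<in> U ?j})
              {x \<in> topspace (subtopology E {x \<in> topspace E. p x \<in> U ?j}). \<Phi> ?j x \<in> V ?i}"
        using openin_continuous_map_preimage[OF \<Phi>[OF kb(2)[OF that], THEN conjunct1]] V1 kb[OF that] by blast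
      moreover have "{x \<in> topspace (subtopology E {x \<in> topspace E. p x \<in> U ?j}). \<Phi> ?j x \<in> V ?i} = W k"
        by (auto simp: W_def)
      ultimately have "openin (subtopology E {x \<in> topspace E. p x \<in> U ?j}) (W k)" by simp
      from openin_trans_full[OF this o1] show ?thesis .
    qed
    have Wcover: "(\<Union>k\<le>N. W k) = topspace E"
    proof
      show "(\<Union>k\<le>N. W k) \<subseteq> topspace E" by (auto simp: W_def)
      show "topspace E \<subseteq> (\<Union>k\<le>N. W k)"
      proof
        fix x assume x: "x \<in> topspace E"
        then have "p x \<in> topspace B" using continuous_map_image_subset_topspace[OF hf[THEN conjunct1]] by blast
        then obtain j where j: "j \<le> m" "p x \<in> U j" using U2 by auto
        have "\<Phi> j x \<in> topspace (subtopology E ?F0)"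
          using continuous_map_image_subset_topspace[OF \<Phi>[OF j(1), THEN conjunct1]] x j(2) by auto
        then obtain i where i: "i \<le> n" "\<Phi> j x \<in> V i" using V2 by auto
        define k where "k = i*(m+1) + j"
        have km: "k mod (m+1) = j" "k div (m+1) = i" using km_aux[OF j(1), of i] by (simp_all only: k_def)
        have "k \<le> N"
        proof -
          have "i*(m+1) + j < i*(m+1) + (m+1)" using j by simp
          also have "\<dots> = (i+1)*(m+1)" by simp
          also have "\<dots> \<le> (n+1)*(m+1)" using i(1) by (intro mult_le_mono1) simp
          finally show ?thesis by (simp add: N_def k_def)
        qed
        moreover have "x \<in> W k" using x j i km by (auto simp: W_def)
        ultimately show "x \<in> (\<Union>k\<le>N. W k)" by blast
      qed
    qed
    have Whom: "homotopic_with (\<lambda>_. True) (subtopology E (W k)) E' f g" if "k \<le> N" for k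
      unfolding W_def
      by (rule piece[OF assms(5,6) \<Phi>[OF kb(2)[OF that], THEN conjunct1]
            \<Phi>[OF kb(2)[OF that], THEN conjunct2] V3[rule_format, OF kb(1)[OF that]]])
    have "homotopic_distance E E' f g \<le> enat N"
      unfolding homotopic_distance_def
      by (rule INF_lower) (use Wopen Wcover Whom in blast)
    then have "homotopic_distance E E' f g + 1 \<le> enat N + 1" by (rule add_right_mono)
    also have "enat N + 1 = (enat n + 1) * (enat m + 1)"
      by (simp add: N_def one_enat_def)
    finally show ?thesis using n m by simp
  qed
qed

end
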